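(* Let $G$ be a vertex-transitive graph and let $\{W_v\}_{v\in V(G)}$ be subspaces of $\mathbb{C}^d$ such that distinct non-adjacent vertices receive orthogonal subspaces. Then $\sum_{v\in V(G)}\dim W_v\le \dfrac{d\cdot|V(G)|}{\overline{\xi_f}(G)}$.
   Context: For a graph $G$, the complement of the projective rank $\overline{\xi_f}(G)$ is the infimum of $d/r$ over all $d,r\in\mathbb{N}$ for which there is an assignment of $r$-dimensional subspaces $W_v\le\mathbb{C}^d$ to the vertices $v$ of $G$ such that distinct non-adjacent vertices receive orthogonal subspaces. *)

theory Defs
  imports Complex_Main "HOL-Library.Function_Algebras"
begin

text \<open>Vectors of \<open>\<complex>^d\<close> are represented as functions \<open>nat \<Rightarrow> complex\<close> vanishing
  outside \<open>{..<d}\<close>; complex scalar multiplication is pointwise.\<close>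

definition cscale :: "complex \<Rightarrow> (nat \<Rightarrow> complex) \<Rightarrow> (nat \<Rightarrow> complex)" where
  "cscale c v = (\<lambda>i. c * v i)"

definition cvecs :: "nat \<Rightarrow> (nat \<Rightarrow> complex) set" where
  "cvecs d = {v. \<forall>i\<ge>d. v i = 0}"

definition csubspace_of :: "nat \<Rightarrow> (nat \<Rightarrow> complex) set \<Rightarrow> bool" where
  "csubspace_of d W \<longleftrightarrow> module.subspace cscale W \<and> W \<subseteq> cvecs d"

definition cdim :: "(nat \<Rightarrow> complex) set \<Rightarrow> nat" where
  "cdim W = vector_space.dim cscale W"

definition cinner :: "nat \<Rightarrow> (nat \<Rightarrow> complex) \<Rightarrow> (nat \<Rightarrow> complex) \<Rightarrow> complex" where
  "cinner d u w = (\<Sum>i<d. u i * cnj (w i))"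

definition orth_subspaces :: "nat \<Rightarrow> (nat \<Rightarrow> complex) set \<Rightarrow> (nat \<Rightarrow> complex) set \<Rightarrow> bool" where
  "orth_subspaces d U W \<longleftrightarrow> (\<forall>x\<in>U. \<forall>y\<in>W. cinner d x y = 0)"

definition simple_graph :: "'a set \<Rightarrow> ('a \<Rightarrow> 'a \<Rightarrow> bool) \<Rightarrow> bool" where
  "simple_graph V E \<longleftrightarrow> finite V \<and> (\<forall>u\<in>V. \<forall>v\<in>V. E u v \<longleftrightarrow> E v u) \<and> (\<forall>v\<in>V. \<not> E v v)"

definition graph_automorphism :: "'a set \<Rightarrow> ('a \<Rightarrow> 'a \<Rightarrow> bool) \<Rightarrow> ('a \<Rightarrow> 'a) \<Rightarrow> bool" where
  "graph_automorphism V E \<sigma> \<longleftrightarrow> bij_betw \<sigma> V V \<and> (\<forall>u\<in>V. \<forall>v\<in>V. E (\<sigma> u) (\<sigma> v) \<longleftrightarrow> E u v)"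

definition vertex_transitive :: "'a set \<Rightarrow> ('a \<Rightarrow> 'a \<Rightarrow> bool) \<Rightarrow> bool" where
  "vertex_transitive V E \<longleftrightarrow> (\<forall>u\<in>V. \<forall>v\<in>V. \<exists>\<sigma>. graph_automorphism V E \<sigma> \<and> \<sigma> u = v)"

definition compl_orth_rep :: "'a set \<Rightarrow> ('a \<Rightarrow> 'a \<Rightarrow> bool) \<Rightarrow> nat \<Rightarrow> ('a \<Rightarrow> (nat \<Rightarrow> complex) set) \<Rightarrow> bool" where
  "compl_orth_rep V E d W \<longleftrightarrow>
     (\<forall>v\<in>V. csubspace_of d (W v)) \<and>
     (\<forall>u\<in>V. \<forall>v\<in>V. u \<noteq> v \<and> \<not> E u v \<longrightarrow> orth_subspaces d (W u) (W v))"

definition compl_proj_rank :: "'a set \<Rightarrow> ('a \<Rightarrow> 'a \<Rightarrow> bool) \<Rightarrow> real" where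
  "compl_proj_rank V E = Inf {real d / real r | d r. d \<ge> 1 \<and> r \<ge> 1 \<and>
      (\<exists>W. compl_orth_rep V E d W \<and> (\<forall>v\<in>V. cdim (W v) = r))}"

end

theory Submission
  imports Defs "HOL-Library.FuncSet"
begin

lemma cscale_vs: "vector_space cscale"
  by unfold_locales (auto simp: cscale_def fun_eq_iff algebra_simps)

interpretation cs: vector_space cscale by (rule cscale_vs)

lemma cscale_apply: "cscale c v i = c * v i" by (simp add: cscale_def)

lemma sum_fun_apply: "(sum f A) i = sum (\<lambda>a. f a i) A"
  by (induction A rule: infinite_finite_induct) auto

definition delta :: "nat \<Rightarrow> nat \<Rightarrow> complex" where
  "delta k = (\<lambda>j. if j = k then 1 else 0)"

lemma cvecs_span: "cvecs m \<subseteq> cs.span (delta ` {..<m})"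
proof
  fix x assume x: "x \<in> cvecs m"
  have "x = (\<Sum>i<m. cscale (x i) (delta i))"
  proof
    fix j
    have "(\<Sum>a<m. cscale (x a) (delta a)) j = (\<Sum>a<m. if a = j then x j else 0)"
      unfolding sum_fun_apply by (intro sum.cong) (auto simp: delta_def cscale_apply)
    also have "\<dots> = x j" using x by (auto simp: cvecs_def)
    finally show "x j = (\<Sum>a<m. cscale (x a) (delta a)) j" by simp
  qed
  also have "\<dots> \<in> cs.span (delta ` {..<m})"
    by (intro cs.span_sum cs.span_scale cs.span_base) auto
  finally show "x \<in> cs.span (delta ` {..<m})" .
qed

lemma fin_basis:
  assumes "cs.subspace P" "P \<subseteq> cvecs m"
  obtains B where "finite B" "B \<subseteq> P" "cs.independent B" "cs.span B = P"
    "card B = cs.dim P" "card B \<le> m"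
proof -
  obtain B where B: "B \<subseteq> P" "cs.independent B" "P \<subseteq> cs.span B" "card B = cs.dim P"
    using cs.basis_exists by blast
  have "finite B \<and> card B \<le> card (delta ` {..<m})"
    using B assms cvecs_span[of m] by (intro cs.independent_span_bound) auto
  moreover have "card (delta ` {..<m}) \<le> m"
    using card_image_le[of "{..<m}" delta] by simp
  moreover have "cs.span B = P" using B assms cs.span_subspace by blast
  ultimately show ?thesis using that B by auto
qed

lemma cdim_le:
  assumes "cs.subspace P" "P \<subseteq> cvecs m" shows "cs.dim P \<le> m"
  using fin_basis[OF assms] by metis

definition sh :: "nat \<Rightarrow> (nat \<Rightarrow> complex) \<Rightarrow> (nat \<Rightarrow> complex)" where
  "sh m q = (\<lambda>i. if i < m then 0 else q (i - m))"

definition join :: "nat \<Rightarrow> (nat \<Rightarrow> complex) set \<Rightarrow> (nat \<Rightarrow> complex) set \<Rightarrow> (nat \<Rightarrow> complex) set" where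
  "join m P Q = {x + y | x y. x \<in> P \<and> y \<in> sh m ` Q}"

lemma sh_hom: "module_hom cscale cscale (sh m)"
  unfolding module_hom_iff
  using cs.module_axioms by (auto simp: sh_def fun_eq_iff algebra_simps cscale_apply)

lemma sh_inj: "inj (sh m)"
proof
  fix x y assume "sh m x = sh m y"
  hence "sh m x (i + m) = sh m y (i + m)" for i by simp
  thus "x = y" by (auto simp: sh_def fun_eq_iff)
qed

lemma span_sh: "cs.span (sh m ` S) = sh m ` cs.span S"
  using module_hom.span_image[OF sh_hom] by blast

lemma join_props:
  assumes P: "cs.subspace P" "P \<subseteq> cvecs m" and Q: "cs.subspace Q" "Q \<subseteq> cvecs n"
  shows "cs.subspace (join m P Q)" "join m P Q \<subseteq> cvecs (m + n)"
    "cs.dim (join m P Q) = cs.dim P + cs.dim Q"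
proof -
  obtain BP where BP: "finite BP" "BP \<subseteq> P" "cs.independent BP" "cs.span BP = P" "card BP = cs.dim P"
    using fin_basis[OF P] by metis
  obtain BQ where BQ: "finite BQ" "BQ \<subseteq> Q" "cs.independent BQ" "cs.span BQ = Q" "card BQ = cs.dim Q"
    using fin_basis[OF Q] by metis
  define B where "B = BP \<union> sh m ` BQ"
  have spanB: "cs.span B = join m P Q"
    unfolding B_def cs.span_Un span_sh BP BQ join_def by blast
  thus "cs.subspace (join m P Q)" by (metis cs.subspace_span)
  show "join m P Q \<subseteq> cvecs (m + n)"
  proof
    fix z assume "z \<in> join m P Q"
    then obtain x q where z: "z = x + sh m q" "x \<in> P" "q \<in> Q" unfolding join_def by blast
    have "x \<in> cvecs m" "q \<in> cvecs n" using z P Q by blast+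
    thus "z \<in> cvecs (m + n)" using z(1) by (auto simp: cvecs_def sh_def)
  qed
  have van: "x = 0" if "x \<in> P" "x \<in> sh m ` Q" for x
    using that P(2) by (auto simp: cvecs_def sh_def fun_eq_iff)
  have z: "0 \<notin> BP" using BP(3) cs.dependent_zero by blast
  have disj: "BP \<inter> sh m ` BQ = {}"
  proof (rule ccontr)
    assume "BP \<inter> sh m ` BQ \<noteq> {}"
    then obtain c where c: "c \<in> BP" "c \<in> sh m ` BQ" by blast
    hence "c \<in> P" "c \<in> sh m ` Q" using BP(2) BQ(2) by auto
    hence "c = 0" by (rule van)
    thus False using c z by simp
  qed
  have indep: "cs.independent B"
    unfolding cs.dependent_def
  proof (intro notI, elim bexE)
    fix a assume aB: "a \<in> B" and asp: "a \<in> cs.span (B - {a})"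
    show False
    proof (cases "a \<in> BP")
      case True
      have "B - {a} \<subseteq> (BP - {a}) \<union> sh m ` BQ" unfolding B_def by blast
      hence "a \<in> cs.span ((BP - {a}) \<union> sh m ` BQ)" using asp cs.span_mono by blast
      then obtain x y where xy: "a = x + y" "x \<in> cs.span (BP - {a})" "y \<in> sh m ` cs.span BQ"
        unfolding cs.span_Un span_sh by blast
      have "x \<in> P" using xy(2) cs.span_mono[of "BP - {a}" BP] BP by blast
      hence "x \<in> cvecs m" using P by blast
      moreover have "a \<in> cvecs m" using True BP P by blast
      ultimately have "a = x"
      proof (intro ext)
        fix i
        obtain q where q: "y = sh m q" using xy(3) by blast
        show "a i = x i"
        proof (cases "i < m")
          case True thus ?thesis using xy(1) q by (simp add: sh_def)
        next
          case False thus ?thesis using \<open>x \<in> cvecs m\<close> \<open>a \<in> cvecs m\<close>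
            by (simp add: cvecs_def)
        qed
      qed
      hence "cs.dependent BP" using True xy(2) cs.dependent_def by blast
      thus False using BP by blast
    next
      case False
      then obtain b where b: "b \<in> BQ" "a = sh m b" using aB B_def by blast
      have "B - {a} \<subseteq> BP \<union> sh m ` (BQ - {b})" unfolding B_def b using sh_inj
        by (auto dest: injD)
      hence "a \<in> cs.span (BP \<union> sh m ` (BQ - {b}))" using asp cs.span_mono by blast
      then obtain x y where xy: "a = x + y" "x \<in> P" "y \<in> sh m ` cs.span (BQ - {b})"
        unfolding cs.span_Un span_sh BP by blast
      then obtain q where q: "y = sh m q" "q \<in> cs.span (BQ - {b})" by blast
      have "x \<in> cvecs m" using xy P by blast
      hence "a (i + m) = q i" for i using xy(1) q by (auto simp: cvecs_def sh_def)
      hence "b = q" using b by (auto simp: sh_def fun_eq_iff)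
      hence "cs.dependent BQ" using b q cs.dependent_def by blast
      thus False using BQ by blast
    qed
  qed
  have "card B = card BP + card BQ"
    unfolding B_def using BP(1) BQ(1) disj
    by (simp add: card_Un_disjoint card_image inj_on_subset[OF sh_inj])
  thus "cs.dim (join m P Q) = cs.dim P + cs.dim Q"
    using cs.dim_span_eq_card_independent[OF indep] spanB BP BQ by simp
qed

lemma sum_split: "(\<Sum>i<m+n. g i) = (\<Sum>i<m. g i) + (\<Sum>i<(n::nat). g (i+m))"
  by (induction n) (auto simp: ac_simps)

lemma cinner_join:
  assumes "x \<in> cvecs m" "x' \<in> cvecs m"
  shows "cinner (m+n) (x + sh m y) (x' + sh m y') = cinner m x x' + cinner n y y'"
proof -
  have 1: "(\<Sum>i<m. (x + sh m y) i * cnj ((x' + sh m y') i)) = (\<Sum>i<m. x i * cnj (x' i))"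
    by (intro sum.cong) (auto simp: sh_def)
  have 2: "(\<Sum>i<n. (x + sh m y) (i+m) * cnj ((x' + sh m y') (i+m))) = (\<Sum>i<n. y i * cnj (y' i))"
    using assms by (intro sum.cong) (auto simp: sh_def cvecs_def)
  show ?thesis unfolding cinner_def sum_split 1 2 ..
qed

lemma orth_join:
  assumes "P \<subseteq> cvecs m" "P' \<subseteq> cvecs m" "orth_subspaces m P P'" "orth_subspaces n Q Q'"
  shows "orth_subspaces (m+n) (join m P Q) (join m P' Q')"
  unfolding orth_subspaces_def
proof (intro ballI)
  fix z z' assume "z \<in> join m P Q" "z' \<in> join m P' Q'"
  then obtain x y x' y' where z: "z = x + sh m y" "x \<in> P" "y \<in> Q"
    and z': "z' = x' + sh m y'" "x' \<in> P'" "y' \<in> Q'" unfolding join_def by blast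
  have "cinner (m+n) z z' = cinner m x x' + cinner n y y'"
    unfolding z(1) z'(1) using z z' assms by (intro cinner_join) auto
  also have "\<dots> = 0" using assms z z' unfolding orth_subspaces_def by simp
  finally show "cinner (m+n) z z' = 0" .
qed

fun bigW :: "nat \<Rightarrow> ('a \<Rightarrow> (nat \<Rightarrow> complex) set) list \<Rightarrow> 'a \<Rightarrow> (nat \<Rightarrow> complex) set" where
  "bigW d [] u = {0}"
| "bigW d (F # Fs) u = join d (F u) (bigW d Fs u)"

lemma dim_zero: "cs.dim {0} = 0"
  using cs.dim_span_eq_card_independent[of "{}"] cs.span_empty cs.independent_empty by simp

lemma bigW_props:
  assumes "\<forall>F\<in>set Fs. (\<forall>u\<in>V. cs.subspace (F u) \<and> F u \<subseteq> cvecs d) \<and>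
     (\<forall>u\<in>V. \<forall>v\<in>V. u \<noteq> v \<and> \<not> E u v \<longrightarrow> orth_subspaces d (F u) (F v))"
  shows "(\<forall>u\<in>V. cs.subspace (bigW d Fs u) \<and> bigW d Fs u \<subseteq> cvecs (d * length Fs) \<and>
            cs.dim (bigW d Fs u) = (\<Sum>F\<leftarrow>Fs. cs.dim (F u))) \<and>
         (\<forall>u\<in>V. \<forall>v\<in>V. u \<noteq> v \<and> \<not> E u v \<longrightarrow> orth_subspaces (d * length Fs) (bigW d Fs u) (bigW d Fs v))"
  using assms
proof (induction Fs)
  case Nil
  show ?case by (auto simp: dim_zero cvecs_def orth_subspaces_def cinner_def cs.subspace_single_0)
next
  case (Cons F Fs)
  have IH: "\<forall>u\<in>V. cs.subspace (bigW d Fs u) \<and> bigW d Fs u \<subseteq> cvecs (d * length Fs) \<and>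
            cs.dim (bigW d Fs u) = (\<Sum>F\<leftarrow>Fs. cs.dim (F u))"
    "\<forall>u\<in>V. \<forall>v\<in>V. u \<noteq> v \<and> \<not> E u v \<longrightarrow> orth_subspaces (d * length Fs) (bigW d Fs u) (bigW d Fs v)"
    using Cons by auto
  have F: "\<forall>u\<in>V. cs.subspace (F u) \<and> F u \<subseteq> cvecs d"
    "\<forall>u\<in>V. \<forall>v\<in>V. u \<noteq> v \<and> \<not> E u v \<longrightarrow> orth_subspaces d (F u) (F v)"
    using Cons.prems by auto
  have len: "d * length (F # Fs) = d + d * length Fs" by simp
  show ?case unfolding len
  proof (intro conjI ballI impI)
    fix u assume u: "u \<in> V"
    note jp = join_props[of "F u" d "bigW d Fs u" "d * length Fs"]
    show "cs.subspace (bigW d (F # Fs) u)" using jp u F IH by simp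
    show "bigW d (F # Fs) u \<subseteq> cvecs (d + d * length Fs)" using jp u F IH by simp
    show "cs.dim (bigW d (F # Fs) u) = (\<Sum>F\<leftarrow>F # Fs. cs.dim (F u))" using jp u F IH by simp
  next
    fix u v assume uv: "u \<in> V" "v \<in> V" "u \<noteq> v \<and> \<not> E u v"
    show "orth_subspaces (d + d * length Fs) (bigW d (F # Fs) u) (bigW d (F # Fs) v)"
      using uv F IH by (simp add: orth_join)
  qed
qed

lemma cvecs_subspace: "cs.subspace (cvecs m)"
  unfolding cs.subspace_def by (auto simp: cvecs_def cscale_apply)

lemma dim_cvecs1: "cs.dim (cvecs 1) = 1"
proof -
  have "cvecs 1 \<subseteq> cs.span {delta 0}" using cvecs_span[of 1] by (simp add: lessThan_Suc)
  moreover have "cs.span {delta 0} \<subseteq> cvecs 1"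
    using cvecs_subspace[of 1] by (intro cs.span_minimal) (auto simp: cvecs_def delta_def)
  ultimately have eq: "cs.span {delta 0} = cvecs 1" by blast
  have "delta 0 \<noteq> 0" by (auto simp: delta_def fun_eq_iff)
  hence "cs.independent {delta 0}" using cs.independent_insert[of "delta 0" "{}"] by simp
  from cs.dim_span_eq_card_independent[OF this] show ?thesis using eq by simp
qed

definition autos :: "'a set \<Rightarrow> ('a \<Rightarrow> 'a \<Rightarrow> bool) \<Rightarrow> ('a \<Rightarrow> 'a) set" where
  "autos V E = {\<sigma>. graph_automorphism V E \<sigma> \<and> (\<forall>x. x \<notin> V \<longrightarrow> \<sigma> x = x)}"

lemma autos_id: "id \<in> autos V E"
  unfolding autos_def graph_automorphism_def by auto

lemma autos_bij: "\<sigma> \<in> autos V E \<Longrightarrow> bij_betw \<sigma> V V"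
  unfolding autos_def graph_automorphism_def by auto

lemma autos_E: "\<sigma> \<in> autos V E \<Longrightarrow> u \<in> V \<Longrightarrow> v \<in> V \<Longrightarrow> E (\<sigma> u) (\<sigma> v) \<longleftrightarrow> E u v"
  unfolding autos_def graph_automorphism_def by auto

lemma autos_in: "\<sigma> \<in> autos V E \<Longrightarrow> u \<in> V \<Longrightarrow> \<sigma> u \<in> V"
  using autos_bij bij_betwE by blast

lemma autos_finite: "finite V \<Longrightarrow> finite (autos V E)"
proof -
  assume fV: "finite V"
  have inj: "inj_on (\<lambda>\<sigma>. restrict \<sigma> V) (autos V E)"
  proof
    fix \<sigma> \<tau> assume "\<sigma> \<in> autos V E" "\<tau> \<in> autos V E" "restrict \<sigma> V = restrict \<tau> V"
    show "\<sigma> = \<tau>"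
    proof
      fix x show "\<sigma> x = \<tau> x"
      proof (cases "x \<in> V")
        case True thus ?thesis using fun_cong[OF \<open>restrict \<sigma> V = restrict \<tau> V\<close>, of x] by simp
      next
        case False thus ?thesis using \<open>\<sigma> \<in> autos V E\<close> \<open>\<tau> \<in> autos V E\<close> unfolding autos_def by simp
      qed
    qed
  qed
  have "(\<lambda>\<sigma>. restrict \<sigma> V) ` autos V E \<subseteq> PiE V (\<lambda>_. V)"
    using autos_in by fastforce
  moreover have "finite (PiE V (\<lambda>_. V))" using fV by (simp add: finite_PiE)
  ultimately show ?thesis using inj inj_on_finite by blast
qed

lemma autos_comp:
  assumes s: "\<sigma> \<in> autos V E" and t: "\<tau> \<in> autos V E" shows "\<sigma> \<circ> \<tau> \<in> autos V E"
proof -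
  have "bij_betw (\<sigma> \<circ> \<tau>) V V" using autos_bij[OF s] autos_bij[OF t] bij_betw_trans by blast
  moreover have "\<forall>u\<in>V. \<forall>v\<in>V. E ((\<sigma> \<circ> \<tau>) u) ((\<sigma> \<circ> \<tau>) v) \<longleftrightarrow> E u v"
    using autos_E[OF s] autos_E[OF t] autos_in[OF t] by simp
  moreover have "\<forall>x. x \<notin> V \<longrightarrow> (\<sigma> \<circ> \<tau>) x = x" using s t unfolding autos_def by simp
  ultimately show ?thesis unfolding autos_def graph_automorphism_def by blast
qed

lemma autos_trans:
  assumes "vertex_transitive V E" "u \<in> V" "v \<in> V"
  shows "\<exists>\<tau>\<in>autos V E. \<tau> u = v"
proof -
  obtain \<sigma> where s: "graph_automorphism V E \<sigma>" "\<sigma> u = v"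
    using assms unfolding vertex_transitive_def by blast
  define \<tau> where "\<tau> x = (if x \<in> V then \<sigma> x else x)" for x
  have "bij_betw \<sigma> V V" using s(1) unfolding graph_automorphism_def by blast
  moreover have "bij_betw \<tau> V V = bij_betw \<sigma> V V" by (rule bij_betw_cong) (simp add: \<tau>_def)
  ultimately have "bij_betw \<tau> V V" by simp
  moreover have "\<forall>a\<in>V. \<forall>b\<in>V. E (\<tau> a) (\<tau> b) \<longleftrightarrow> E a b"
    using s(1) unfolding graph_automorphism_def \<tau>_def by auto
  moreover have "\<forall>x. x \<notin> V \<longrightarrow> \<tau> x = x" by (simp add: \<tau>_def)
  ultimately have "\<tau> \<in> autos V E"
    unfolding autos_def graph_automorphism_def by blast
  moreover have "\<tau> u = v" using s assms by (simp add: \<tau>_def)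
  ultimately show ?thesis by blast
qed

lemma autos_right:
  assumes "finite V" "\<tau> \<in> autos V E"
  shows "inj_on (\<lambda>\<sigma>. \<sigma> \<circ> \<tau>) (autos V E)" "(\<lambda>\<sigma>. \<sigma> \<circ> \<tau>) ` autos V E = autos V E"
proof -
  show inj: "inj_on (\<lambda>\<sigma>. \<sigma> \<circ> \<tau>) (autos V E)"
  proof
    fix \<sigma>1 \<sigma>2 assume s: "\<sigma>1 \<in> autos V E" "\<sigma>2 \<in> autos V E" "\<sigma>1 \<circ> \<tau> = \<sigma>2 \<circ> \<tau>"
    show "\<sigma>1 = \<sigma>2"
    proof
      fix x show "\<sigma>1 x = \<sigma>2 x"
      proof (cases "x \<in> V")
        case True
        then obtain y where "y \<in> V" "x = \<tau> y"
          using autos_bij[OF assms(2)] by (metis bij_betw_imp_surj_on imageE)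
        thus ?thesis using s(3) by (metis comp_apply)
      next
        case False thus ?thesis using s unfolding autos_def by auto
      qed
    qed
  qed
  show "(\<lambda>\<sigma>. \<sigma> \<circ> \<tau>) ` autos V E = autos V E"
  proof -
    have "(\<lambda>\<sigma>. \<sigma> \<circ> \<tau>) ` autos V E \<subseteq> autos V E" using autos_comp[OF _ assms(2)] by blast
    thus ?thesis by (rule endo_inj_surj[OF autos_finite[OF assms(1)] _ inj])
  qed
qed

lemma rep_of_list:
  assumes "\<forall>F\<in>set Fs. (\<forall>u\<in>V. cs.subspace (F u) \<and> F u \<subseteq> cvecs d) \<and>
     (\<forall>u\<in>V. \<forall>v\<in>V. u \<noteq> v \<and> \<not> E u v \<longrightarrow> orth_subspaces d (F u) (F v))"
  shows "compl_orth_rep V E (d * length Fs) (bigW d Fs)"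
    "\<forall>u\<in>V. cdim (bigW d Fs u) = (\<Sum>F\<leftarrow>Fs. cdim (F u))"
  using bigW_props[OF assms]
  unfolding compl_orth_rep_def csubspace_of_def cdim_def by auto

theorem corollary15:
  fixes V :: "'a set" and E :: "'a \<Rightarrow> 'a \<Rightarrow> bool"
    and d :: nat and W :: "'a \<Rightarrow> (nat \<Rightarrow> complex) set"
  assumes "simple_graph V E"
    and "vertex_transitive V E"
    and "compl_orth_rep V E d W"
  shows "(\<Sum>v\<in>V. real (cdim (W v))) \<le> real d * real (card V) / compl_proj_rank V E"
proof -
  define X where "X = {real d / real r | d r. d \<ge> 1 \<and> r \<ge> 1 \<and>
      (\<exists>W. compl_orth_rep V E d W \<and> (\<forall>v\<in>V. cdim (W v) = r))}"
  have xi: "compl_proj_rank V E = Inf X" unfolding compl_proj_rank_def X_def ..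
  have fV: "finite V" using assms(1) unfolding simple_graph_def by blast
  have Wv: "cs.subspace (W v)" "W v \<subseteq> cvecs d" if "v \<in> V" for v
    using assms(3) that unfolding compl_orth_rep_def csubspace_of_def by auto
  have Worth: "orth_subspaces d (W u) (W v)" if "u \<in> V" "v \<in> V" "u \<noteq> v" "\<not> E u v" for u v
    using assms(3) that unfolding compl_orth_rep_def by auto
  define S where "S = (\<Sum>v\<in>V. cdim (W v))"
  have S_real: "(\<Sum>v\<in>V. real (cdim (W v))) = real S" unfolding S_def by simp
  show ?thesis
  proof (cases "V = {}")
    case True thus ?thesis by simp
  next
    case False
    have lower: "1 \<le> x" if "x \<in> X" for x
    proof -
      obtain d' r W' where x: "x = real d' / real r" "r \<ge> 1" "compl_orth_rep V E d' W'"
        "\<forall>v\<in>V. cdim (W' v) = r"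
        using \<open>x \<in> X\<close> unfolding X_def by blast
      obtain v where "v \<in> V" using False by blast
      hence "r \<le> d'" using x cdim_le[of "W' v" d']
        unfolding compl_orth_rep_def csubspace_of_def cdim_def by auto
      thus ?thesis using x by simp
    qed
    obtain xs where xs: "distinct xs" "set xs = V" using finite_distinct_list[OF fV] by blast
    define Fs0 where "Fs0 = map (\<lambda>w. \<lambda>u. if u = w then cvecs 1 else {0}) xs"
    have Fs0_ok: "\<forall>F\<in>set Fs0. (\<forall>u\<in>V. cs.subspace (F u) \<and> F u \<subseteq> cvecs 1) \<and>
     (\<forall>u\<in>V. \<forall>v\<in>V. u \<noteq> v \<and> \<not> E u v \<longrightarrow> orth_subspaces 1 (F u) (F v))"
      unfolding Fs0_def using cvecs_subspace[of 1]
      by (auto simp: cvecs_def orth_subspaces_def cinner_def)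
    note r0 = rep_of_list[OF Fs0_ok]
    have dims0: "cdim (bigW 1 Fs0 u) = 1" if "u \<in> V" for u
    proof -
      have "cdim (bigW 1 Fs0 u) = (\<Sum>w\<leftarrow>xs. cdim (if u = w then cvecs 1 else {0}))"
        using r0(2) that unfolding Fs0_def by (simp add: comp_def)
      also have "\<dots> = (\<Sum>w\<in>V. cdim (if u = w then cvecs 1 else {0}))"
        using xs by (simp add: sum_list_distinct_conv_sum_set)
      also have "\<dots> = (\<Sum>w\<in>V. if u = w then 1 else 0)"
        by (intro sum.cong) (auto simp: cdim_def dim_cvecs1[unfolded One_nat_def] dim_zero)
      also have "\<dots> = 1" using fV that by simp
      finally show ?thesis .
    qed
    have len0: "length Fs0 = card V" unfolding Fs0_def using xs distinct_card by fastforce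
    have "real (1 * length Fs0) / real (1::nat) \<in> X"
      unfolding X_def using r0(1) dims0 len0 False fV
      by (intro CollectI exI[of _ "1 * length Fs0"] exI[of _ "1::nat"]) (auto simp: card_gt_0_iff Suc_le_eq)
    hence Xne: "X \<noteq> {}" by blast
    have bdd: "bdd_below X" using lower by (intro bdd_belowI[of X 1]) auto
    have xi1: "1 \<le> Inf X" using Xne lower by (intro cInf_greatest) auto
    show ?thesis
    proof (cases "S = 0")
      case True thus ?thesis unfolding S_real xi using xi1 by simp
    next
      case False
      define A where "A = autos V E"
      have fA: "finite A" unfolding A_def using autos_finite[OF fV] .
      have idA: "id \<in> A" unfolding A_def by (rule autos_id)
      have Apos: "card A \<ge> 1" using fA idA by (metis One_nat_def Suc_leI card_gt_0_iff empty_iff)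
      define f where "f u = (\<Sum>\<sigma>\<in>A. cdim (W (\<sigma> u)))" for u
      have fconst: "f u' = f u" if uu: "u \<in> V" "u' \<in> V" for u u'
      proof -
        obtain \<tau> where t: "\<tau> \<in> A" "\<tau> u = u'" using autos_trans[OF assms(2) uu] A_def by blast
        have "f u' = (\<Sum>\<sigma>\<in>A. cdim (W ((\<sigma> \<circ> \<tau>) u)))" unfolding f_def using t by simp
        also have "\<dots> = sum (\<lambda>\<sigma>. cdim (W (\<sigma> u))) ((\<lambda>\<sigma>. \<sigma> \<circ> \<tau>) ` A)"
          using autos_right(1)[OF fV t(1)[unfolded A_def]] unfolding A_def
          by (simp add: sum.reindex)
        also have "\<dots> = f u" using autos_right(2)[OF fV t(1)[unfolded A_def]]
          unfolding A_def f_def by simp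
        finally show ?thesis .
      qed
      obtain u0 where u0: "u0 \<in> V" using \<open>V \<noteq> {}\<close> by blast
      define r where "r = f u0"
      have "(\<Sum>u\<in>V. f u) = (\<Sum>\<sigma>\<in>A. \<Sum>u\<in>V. cdim (W (\<sigma> u)))"
        unfolding f_def by (rule sum.swap)
      also have "\<dots> = (\<Sum>\<sigma>\<in>A. S)"
      proof (intro sum.cong refl)
        fix \<sigma> assume "\<sigma> \<in> A"
        hence "bij_betw \<sigma> V V" using autos_bij A_def by blast
        thus "(\<Sum>u\<in>V. cdim (W (\<sigma> u))) = S" unfolding S_def by (rule sum.reindex_bij_betw)
      qed
      finally have "(\<Sum>u\<in>V. f u) = card A * S" by simp
      moreover have "(\<Sum>u\<in>V. f u) = card V * r"
        unfolding r_def using fconst[OF u0] by simp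
      ultimately have count: "card V * r = card A * S" by simp
      have rpos: "r \<ge> 1" using count False Apos
        by (metis One_nat_def Suc_leI mult_is_0 not_gr_zero)
      obtain v1 where v1: "v1 \<in> V" "cdim (W v1) \<noteq> 0" using False unfolding S_def
        by (metis sum.neutral)
      have dpos: "d \<ge> 1" using cdim_le[OF Wv[OF v1(1)]] v1 unfolding cdim_def by simp
      obtain ys where ys: "distinct ys" "set ys = A" using finite_distinct_list[OF fA] by blast
      define Fs where "Fs = map (\<lambda>\<sigma>. \<lambda>u. W (\<sigma> u)) ys"
      have Fs_ok: "\<forall>F\<in>set Fs. (\<forall>u\<in>V. cs.subspace (F u) \<and> F u \<subseteq> cvecs d) \<and>
         (\<forall>u\<in>V. \<forall>v\<in>V. u \<noteq> v \<and> \<not> E u v \<longrightarrow> orth_subspaces d (F u) (F v))"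
      proof
        fix F assume "F \<in> set Fs"
        then obtain \<sigma> where s: "\<sigma> \<in> A" "F = (\<lambda>u. W (\<sigma> u))" unfolding Fs_def using ys by auto
        have sA: "\<sigma> \<in> autos V E" using s A_def by simp
        show "(\<forall>u\<in>V. cs.subspace (F u) \<and> F u \<subseteq> cvecs d) \<and>
         (\<forall>u\<in>V. \<forall>v\<in>V. u \<noteq> v \<and> \<not> E u v \<longrightarrow> orth_subspaces d (F u) (F v))"
        proof (intro conjI ballI impI)
          fix u assume "u \<in> V"
          thus "cs.subspace (F u)" "F u \<subseteq> cvecs d" using s Wv autos_in[OF sA] by auto
        next
          fix u v assume uv: "u \<in> V" "v \<in> V" "u \<noteq> v \<and> \<not> E u v"
          have "\<sigma> u \<noteq> \<sigma> v" using uv autos_bij[OF sA] by (metis bij_betw_iff_bijections)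
          moreover have "\<not> E (\<sigma> u) (\<sigma> v)" using uv autos_E[OF sA] by simp
          ultimately show "orth_subspaces d (F u) (F v)"
            using s Worth autos_in[OF sA] uv by simp
        qed
      qed
      note r1 = rep_of_list[OF Fs_ok]
      have dims1: "cdim (bigW d Fs u) = r" if "u \<in> V" for u
      proof -
        have "cdim (bigW d Fs u) = (\<Sum>\<sigma>\<leftarrow>ys. cdim (W (\<sigma> u)))"
          using r1(2) that unfolding Fs_def by (simp add: comp_def)
        also have "\<dots> = f u" unfolding f_def using ys by (simp add: sum_list_distinct_conv_sum_set)
        also have "\<dots> = r" unfolding r_def using fconst[OF u0 that] .
        finally show ?thesis .
      qed
      have len1: "length Fs = card A" unfolding Fs_def using ys distinct_card by fastforce
      have mem: "real (d * card A) / real r \<in> X"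
        unfolding X_def using r1(1) dims1 len1 dpos Apos rpos
        by (intro CollectI exI[of _ "d * card A"] exI[of _ r]) auto
      have le: "Inf X \<le> real (d * card A) / real r" by (rule cInf_lower[OF mem bdd])
      have countR: "real (card V) * real r = real (card A) * real S"
        using count by (metis of_nat_mult)
      have rR: "real r > 0" using rpos by simp
      have "real S * Inf X \<le> real S * (real (d * card A) / real r)"
        using le by (intro mult_left_mono) auto
      also have "\<dots> = real d * (real (card A) * real S) / real r" by simp
      also have "\<dots> = real d * real (card V)" unfolding countR[symmetric] using rR by simp
      finally have "real S * Inf X \<le> real d * real (card V)" .
      thus ?thesis unfolding S_real xi using xi1 by (simp add: pos_le_divide_eq)
    qed
  qed
qed

end
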